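(* Let $\alpha>0$ and consider the framed curvature flow with $\theta$-velocity $\upsilon_\theta=\alpha\,\partial_s^2\theta$ (i.e. the extended system below with $\beta=0$ and $f_4\equiv0$). Assume $|\theta_0(u)|<\pi/2$ for all $u\in S^1$. Then any solution $\{(\Gamma_t,\theta_t)\}_{t\in[0,\underline t]}$ satisfies $|\theta(t,u)|<\pi/2$ for all $(t,u)\in[0,\underline t]\times S^1$, and the extended system remains parabolic (i.e. $\cos\theta>0$ throughout).
   Context: $S^1=\mathbb{R}/2\pi\mathbb{Z}$; closed curves $\Gamma_t$ parametrized by $\gamma(t,\cdot):S^1\to\mathbb{R}^3$, $g=\|\partial_u\gamma\|$, $\partial_s=g^{-1}\partial_u$; Frenet frame $T,N,B$, curvature $\kappa$, torsion $\tau$. For an angle function $\theta$, $\nu_\theta=\cos\theta\,N+\sin\theta\,B$. Framed curvature flow: $\partial_t\gamma=\kappa\nu_\theta$ ($=\cos\theta\,\partial_s^2\gamma+\sin\theta\,\partial_s\gamma\times\partial_s^2\gamma$), $\partial_t\theta=\upsilon_\theta$, $\gamma(0)=\gamma_0$, $\theta(0)=\theta_0$. Extended system: with $\hat\gamma=(\gamma_1,\gamma_2,\gamma_3,\theta)$, $\partial_t\hat\gamma=\hat{\mathcal A}\,\partial_s^2\hat\gamma+f(\partial_s\hat\gamma,\hat\gamma)$, where $\hat{\mathcal A}=\begin{bmatrix}\mathcal A&0\\ \beta^T&\alpha\end{bmatrix}$, $\mathcal A=\cos\theta\,\mathbb I+\sin\theta\,[T]_\times$ ($[T]_\times$ the cross-product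 matrix of $T$), $\alpha>0$, $\beta\in\mathbb{R}^3$, so that $\upsilon_\theta=\alpha\partial_s^2\theta+\kappa\langle\beta,N\rangle+f_4(\partial_s\hat\gamma,\hat\gamma)$. The eigenvalues of $\hat{\mathcal A}$ are $\alpha,\cos\theta,e^{\pm i\theta}$; parabolicity requires $\alpha>0$ and $\cos\theta>0$. *)

theory Defs
  imports "HOL-Analysis.Analysis" "HOL-Analysis.Cross3"
begin

text \<open>A time-dependent closed curve is a map gamma :: real => real => real^3, (t,u) |-> gamma t u,
  2 pi-periodic in u (so u ranges over S^1 = R / 2 pi Z). Same for the angle theta.\<close>

definition dU :: "(real \<Rightarrow> real \<Rightarrow> 'a::real_normed_vector) \<Rightarrow> real \<Rightarrow> real \<Rightarrow> 'a" where
  "dU F t u = vector_derivative (\<lambda>v. F t v) (at u)"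

definition metric_g :: "(real \<Rightarrow> real \<Rightarrow> real^3) \<Rightarrow> real \<Rightarrow> real \<Rightarrow> real" where
  "metric_g \<gamma> t u = norm (dU \<gamma> t u)"

definition dS :: "(real \<Rightarrow> real \<Rightarrow> real^3) \<Rightarrow> (real \<Rightarrow> real \<Rightarrow> 'a::real_normed_vector) \<Rightarrow> real \<Rightarrow> real \<Rightarrow> 'a" where
  "dS \<gamma> F t u = (1 / metric_g \<gamma> t u) *\<^sub>R dU F t u"

definition dS2 :: "(real \<Rightarrow> real \<Rightarrow> real^3) \<Rightarrow> (real \<Rightarrow> real \<Rightarrow> 'a::real_normed_vector) \<Rightarrow> real \<Rightarrow> real \<Rightarrow> 'a" where
  "dS2 \<gamma> F = dS \<gamma> (dS \<gamma> F)"

definition framed_velocity :: "(real \<Rightarrow> real \<Rightarrow> real^3) \<Rightarrow> (real \<Rightarrow> real \<Rightarrow> real) \<Rightarrow> real \<Rightarrow> real \<Rightarrow> real^3" where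
  "framed_velocity \<gamma> \<theta> t u =
     cos (\<theta> t u) *\<^sub>R dS2 \<gamma> \<gamma> t u + sin (\<theta> t u) *\<^sub>R cross3 (dS \<gamma> \<gamma> t u) (dS2 \<gamma> \<gamma> t u)"

definition framed_flow_solution ::
  "real \<Rightarrow> real \<Rightarrow> (real \<Rightarrow> real \<Rightarrow> real^3) \<Rightarrow> (real \<Rightarrow> real \<Rightarrow> real)
     \<Rightarrow> (real \<Rightarrow> real^3) \<Rightarrow> (real \<Rightarrow> real) \<Rightarrow> bool" where
  "framed_flow_solution \<alpha> T \<gamma> \<theta> \<gamma>0 \<theta>0 \<longleftrightarrow>
     0 \<le> T \<and>
     \<comment> \<open>closed curves / functions on S^1\<close>
     (\<forall>t\<in>{0..T}. \<forall>u. \<gamma> t (u + 2*pi) = \<gamma> t u \<and> \<theta> t (u + 2*pi) = \<theta> t u) \<and>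
     \<comment> \<open>spatial regularity (C^2 in u) and regular parametrization\<close>
     (\<forall>t\<in>{0..T}. \<forall>u. (\<lambda>v. \<gamma> t v) differentiable (at u) \<and> (\<lambda>v. dU \<gamma> t v) differentiable (at u)
        \<and> (\<lambda>v. \<theta> t v) differentiable (at u) \<and> (\<lambda>v. dU \<theta> t v) differentiable (at u)
        \<and> dU \<gamma> t u \<noteq> 0) \<and>
     \<comment> \<open>joint continuity in (t,u) of the solution and its u-derivatives up to order 2\<close>
     continuous_on ({0..T} \<times> UNIV) (\<lambda>(t,u). \<gamma> t u) \<and>
     continuous_on ({0..T} \<times> UNIV) (\<lambda>(t,u). dU \<gamma> t u) \<and>
     continuous_on ({0..T} \<times> UNIV) (\<lambda>(t,u). dU (dU \<gamma>) t u) \<and>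
     continuous_on ({0..T} \<times> UNIV) (\<lambda>(t,u). \<theta> t u) \<and>
     continuous_on ({0..T} \<times> UNIV) (\<lambda>(t,u). dU \<theta> t u) \<and>
     continuous_on ({0..T} \<times> UNIV) (\<lambda>(t,u). dU (dU \<theta>) t u) \<and>
     \<comment> \<open>evolution equations\<close>
     (\<forall>t\<in>{0..T}. \<forall>u. ((\<lambda>s. \<gamma> s u) has_vector_derivative framed_velocity \<gamma> \<theta> t u) (at t within {0..T})) \<and>
     (\<forall>t\<in>{0..T}. \<forall>u. ((\<lambda>s. \<theta> s u) has_real_derivative \<alpha> * dS2 \<gamma> \<theta> t u) (at t within {0..T})) \<and>
     \<comment> \<open>initial data\<close>
     (\<forall>u. \<gamma> 0 u = \<gamma>0 u \<and> \<theta> 0 u = \<theta>0 u)"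

text \<open>Parabolicity of the extended system: eigenvalues alpha, cos theta, e^{+-i theta};
  requires alpha > 0 and cos theta > 0.\<close>
definition extended_parabolic :: "real \<Rightarrow> real \<Rightarrow> bool" where
  "extended_parabolic \<alpha> th \<longleftrightarrow> \<alpha> > 0 \<and> cos th > 0"

end

theory Submission
  imports Defs
begin


lemma second_deriv_max:
  fixes F F1 :: "real \<Rightarrow> real"
  assumes d1: "\<And>v. (F has_real_derivative F1 v) (at v)"
    and d2: "(F1 has_real_derivative F2) (at u)"
    and mx: "\<And>v. F v \<le> F u"
  shows "F2 \<le> 0"
proof (rule ccontr)
  assume "\<not> F2 \<le> 0"
  hence pos: "F2 > 0" by simp
  have z: "F1 u = 0" using DERIV_local_max[OF d1[of u], of 1] mx by auto
  obtain d where d: "d > 0" "\<And>h. h > 0 \<Longrightarrow> h < d \<Longrightarrow> F1 u < F1 (u + h)"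
    using DERIV_pos_inc_right[OF d2 pos] by blast
  obtain z where zz: "u < z" "z < u + d/2" "F (u + d/2) - F u = (u + d/2 - u) * F1 z"
    using MVT2[of u "u + d/2" F F1] d1 d(1) by auto
  have "F1 z > 0" using d(2)[of "z - u"] zz z by auto
  hence "(u + d/2 - u) * F1 z > 0" using d(1) by simp
  hence "F (u + d/2) - F u > 0" using zz(3) by linarith
  thus False using mx[of "u + d/2"] by simp
qed

lemma second_deriv_min:
  fixes F F1 :: "real \<Rightarrow> real"
  assumes d1: "\<And>v. (F has_real_derivative F1 v) (at v)"
    and d2: "(F1 has_real_derivative F2) (at u)"
    and mn: "\<And>v. F u \<le> F v"
  shows "F2 \<ge> 0"
proof -
  have "- F2 \<le> 0"
    by (rule second_deriv_max[of "\<lambda>v. - F v" "\<lambda>v. - F1 v"])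
       (auto intro!: DERIV_minus d1 d2 simp: mn)
  thus ?thesis by simp
qed

lemma deriv_prod_zero:
  fixes c F1 :: "real \<Rightarrow> real"
  assumes d2: "(F1 has_real_derivative F2) (at u)"
    and z: "F1 u = 0"
    and c: "isCont c u"
  shows "((\<lambda>v. c v * F1 v) has_real_derivative c u * F2) (at u)"
proof -
  have l1: "((\<lambda>y. (F1 y - F1 u) / (y - u)) \<longlongrightarrow> F2) (at u)"
    using has_field_derivative_iff[THEN iffD1, OF d2] .
  have l2: "(c \<longlongrightarrow> c u) (at u)" using c by (simp add: isCont_def)
  have "((\<lambda>y. c y * ((F1 y - F1 u) / (y - u))) \<longlongrightarrow> c u * F2) (at u)"
    by (rule tendsto_mult[OF l2 l1])
  moreover have "(\<lambda>y. c y * ((F1 y - F1 u) / (y - u))) = (\<lambda>y. (c y * F1 y - c u * F1 u) / (y - u))"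
    using z by auto
  ultimately have "((\<lambda>y. (c y * F1 y - c u * F1 u) / (y - u)) \<longlongrightarrow> c u * F2) (at u)" by simp
  thus ?thesis by (rule has_field_derivative_iff[THEN iffD2])
qed



lemma periodic_int:
  fixes f :: "real \<Rightarrow> 'a"
  assumes p: "\<And>u. f (u + 2*pi) = f u"
  shows "f (u + 2*pi * of_int k) = f u"
proof -
  have n: "f (x + 2*pi*real n) = f x" for x n
  proof (induction n arbitrary: x)
    case 0 then show ?case by simp
  next
    case (Suc n)
    have "f (x + 2*pi*real (Suc n)) = f ((x + 2*pi*real n) + 2*pi)" by (simp add: algebra_simps)
    also have "\<dots> = f x" using p Suc by simp
    finally show ?case .
  qed
  show ?thesis
  proof (cases "k \<ge> 0")
    case True
    then obtain n where "k = int n" by (metis nonneg_eq_int)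
    then show ?thesis using n by simp
  next
    case False
    hence "-k \<ge> 0" by simp
    then obtain n where "-k = int n" using nonneg_eq_int by blast
    hence k: "k = - int n" by simp
    have "f u = f ((u - 2*pi*real n) + 2*pi*real n)" by simp
    also have "\<dots> = f (u - 2*pi*real n)" using n by blast
    finally show ?thesis using k by simp
  qed
qed

lemma periodic_rep:
  fixes f :: "real \<Rightarrow> 'a"
  assumes p: "\<And>u. f (u + 2*pi) = f u"
  shows "\<exists>u'\<in>{0..2*pi}. f u' = f u"
proof -
  define k where "k = \<lfloor>u / (2*pi)\<rfloor>"
  define u' where "u' = u + 2*pi * of_int (-k)"
  have "of_int k \<le> u/(2*pi)" "u/(2*pi) < of_int k + 1" unfolding k_def by linarith+
  hence "2*pi * of_int k \<le> u" "u < 2*pi*(of_int k + 1)"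
    using pi_gt_zero by (simp_all add: field_simps)
  hence "u' \<in> {0..2*pi}" unfolding u'_def by (simp add: algebra_simps)
  moreover have "f u' = f u" unfolding u'_def by (rule periodic_int[of f, OF p])
  ultimately show ?thesis by blast
qed



lemma max_principle:
  fixes \<phi> :: "real \<Rightarrow> real \<Rightarrow> real" and T M t u :: real
  assumes per: "\<And>t u. t \<in> {0..T} \<Longrightarrow> \<phi> t (u + 2*pi) = \<phi> t u"
   and cont: "continuous_on ({0..T} \<times> UNIV) (\<lambda>(t,u). \<phi> t u)"
   and der: "\<And>t u. t \<in> {0..T} \<Longrightarrow> (\<And>v. \<phi> t v \<le> \<phi> t u) \<Longrightarrow>
        \<exists>D\<le>0. ((\<lambda>s. \<phi> s u) has_real_derivative D) (at t within {0..T})"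
   and init: "\<And>u. \<phi> 0 u \<le> M"
   and t: "t \<in> {0..T}"
  shows "\<phi> t u \<le> M"
proof (rule ccontr)
  assume nle: "\<not> \<phi> t u \<le> M"
  define a where "a = \<phi> t u - M"
  have a: "a > 0" using nle a_def by simp
  have T0: "T \<ge> 0" "t \<ge> 0" "t \<le> T" using t by auto
  define \<epsilon> where "\<epsilon> = a / (2*(T+1))"
  have eps: "\<epsilon> > 0" unfolding \<epsilon>_def using a T0 by simp
  define L where "L = M + a/2"
  define w where "w = (\<lambda>s v. \<phi> s v - \<epsilon> * s)"
  have "\<epsilon> * t \<le> \<epsilon> * (T+1)" using eps T0 by simp
  also have "\<epsilon> * (T+1) = a/2" unfolding \<epsilon>_def using T0 by (simp add: field_simps)
  finally have "\<epsilon> * t \<le> a/2" .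
  moreover have "w t u = \<phi> t u - \<epsilon> * t" by (simp add: w_def)
  ultimately have wtu: "w t u \<ge> L" using a_def L_def by argo
  define S where "S = {0..T} \<times> {0..2*pi}"
  define g where "g = (\<lambda>p. w (fst p) (snd p))"
  define K where "K = S \<inter> g -` {L..}"
  have contg: "continuous_on S g"
  proof -
    have "continuous_on S (\<lambda>(t,u). \<phi> t u)"
      by (rule continuous_on_subset[OF cont]) (auto simp: S_def)
    hence c1: "continuous_on S (\<lambda>p. \<phi> (fst p) (snd p))" by (simp add: case_prod_beta)
    have "continuous_on S (\<lambda>p. \<phi> (fst p) (snd p) - \<epsilon> * fst p)"
      by (intro continuous_intros c1)
    thus ?thesis unfolding g_def w_def .
  qed
  have cS: "compact S" unfolding S_def by (simp add: compact_Times)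
  have clK: "closed K" unfolding K_def
    by (rule continuous_closed_preimage[OF contg]) (auto simp: S_def closed_Times)
  have compK: "compact K"
    using clK cS compact_eq_bounded_closed bounded_subset compact_imp_bounded
    unfolding K_def by (metis Int_lower1)
  obtain u' where u': "u' \<in> {0..2*pi}" "\<phi> t u' = \<phi> t u"
    using periodic_rep[of "\<phi> t" u] per[OF t] by blast
  have "(t, u') \<in> K" unfolding K_def S_def g_def using t u' wtu by (auto simp: w_def)
  hence Kne: "K \<noteq> {}" by blast
  obtain p0 where p0: "p0 \<in> K" "\<And>q. q \<in> K \<Longrightarrow> fst p0 \<le> fst q"
    using continuous_attains_inf[OF compK Kne continuous_on_fst[OF continuous_on_id]] by auto
  define ts where "ts = fst p0"
  define u0 where "u0 = snd p0"
  have ts: "ts \<in> {0..T}" "w ts u0 \<ge> L" using p0(1) unfolding K_def S_def g_def ts_def u0_def by auto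
  have minK: "\<And>s v. s \<in> {0..T} \<Longrightarrow> v \<in> {0..2*pi} \<Longrightarrow> w s v \<ge> L \<Longrightarrow> ts \<le> s"
    using p0(2) unfolding K_def S_def g_def ts_def by auto
  have ts_pos: "ts > 0"
  proof (rule ccontr)
    assume "\<not> ts > 0"
    hence "ts = 0" using ts by auto
    hence "w ts u0 \<le> M" using init[of u0] by (simp add: w_def)
    thus False using ts(2) a L_def by simp
  qed
  have cts: "continuous_on {0..2*pi} (\<lambda>v. \<phi> ts v)"
  proof -
    have "continuous_on {0..2*pi} (\<lambda>v. (\<lambda>(t,u). \<phi> t u) (ts, v))"
      by (rule continuous_on_compose2[OF cont, of _ "\<lambda>v. (ts, v)"])
         (use ts(1) in \<open>auto intro!: continuous_intros\<close>)
    thus ?thesis by simp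
  qed
  obtain us where us: "us \<in> {0..2*pi}" "\<And>v. v \<in> {0..2*pi} \<Longrightarrow> \<phi> ts v \<le> \<phi> ts us"
    using continuous_attains_sup[OF _ _ cts] by auto
  have usg: "\<phi> ts v \<le> \<phi> ts us" for v
  proof -
    obtain v' where "v' \<in> {0..2*pi}" "\<phi> ts v' = \<phi> ts v"
      using periodic_rep[of "\<phi> ts" v] per[OF ts(1)] by blast
    thus ?thesis using us(2) by metis
  qed
  have wus: "w ts us \<ge> L" using ts(2) usg[of u0] by (simp add: w_def)
  obtain D where D: "D \<le> 0" "((\<lambda>s. \<phi> s us) has_real_derivative D) (at ts within {0..T})"
    using der[OF ts(1) usg] by blast
  have dw: "((\<lambda>s. w s us) has_real_derivative D - \<epsilon>) (at ts within {0..T})"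
    unfolding w_def by (auto intro!: derivative_eq_intros D(2))
  have "((\<lambda>s. (w s us - w ts us) / (s - ts)) \<longlongrightarrow> D - \<epsilon>) (at ts within {0..T})"
    using has_field_derivative_iff[THEN iffD1, OF dw] by simp
  moreover have "D - \<epsilon> < 0" using D eps by simp
  ultimately have "eventually (\<lambda>s. (w s us - w ts us) / (s - ts) < 0) (at ts within {0..T})"
    using order_tendstoD(2) by blast
  then obtain d where d: "d > 0" "\<And>s. s \<in> {0..T} \<Longrightarrow> s \<noteq> ts \<Longrightarrow> dist s ts < d \<Longrightarrow>
      (w s us - w ts us) / (s - ts) < 0"
    unfolding eventually_at by blast
  define s where "s = max 0 (ts - d/2)"
  have s: "s \<in> {0..T}" "s < ts" "dist s ts < d"
    using ts ts_pos d(1) unfolding s_def dist_real_def by auto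
  have q: "(w s us - w ts us) / (s - ts) < 0" using d(2)[OF s(1) _ s(3)] s(2) by simp
  have "w s us - w ts us > 0"
  proof -
    have "w s us - w ts us = ((w s us - w ts us) / (s - ts)) * (s - ts)" using s(2) by simp
    also have "\<dots> > 0" using q s(2) by (intro mult_neg_neg) auto
    finally show ?thesis .
  qed
  hence "w s us \<ge> L" using wus by simp
  hence "ts \<le> s" using minK[OF s(1) us(1)] by simp
  thus False using s(2) by simp
qed

lemma real_vd:
  fixes f :: "real \<Rightarrow> real"
  assumes "f differentiable (at x)"
  shows "(f has_real_derivative vector_derivative f (at x)) (at x)"
  using assms vector_derivative_works has_real_derivative_iff_has_vector_derivative by blast

lemma dS2_formula:
  fixes \<gamma> :: "real \<Rightarrow> real \<Rightarrow> real^3" and \<theta> :: "real \<Rightarrow> real \<Rightarrow> real"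
  assumes d2: "(\<lambda>v. dU \<theta> t v) differentiable (at u)"
    and dg: "(\<lambda>v. dU \<gamma> t v) differentiable (at u)"
    and nz: "dU \<gamma> t u \<noteq> 0"
    and z: "dU \<theta> t u = 0"
  shows "dS2 \<gamma> \<theta> t u = (1 / metric_g \<gamma> t u) * ((1 / metric_g \<gamma> t u) * dU (dU \<theta>) t u)"
proof -
  define c where "c = (\<lambda>v. 1 / metric_g \<gamma> t v)"
  have "continuous (at u) (\<lambda>v. dU \<gamma> t v)"
    using differentiable_imp_continuous_within[OF dg] by simp
  hence "continuous (at u) (\<lambda>v. 1 / norm (dU \<gamma> t v))"
    using nz by (intro continuous_intros) auto
  hence cc: "isCont c u" unfolding c_def metric_g_def by simp
  have D2: "((\<lambda>v. dU \<theta> t v) has_real_derivative dU (dU \<theta>) t u) (at u)"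
    using real_vd[OF d2] by (simp add: dU_def)
  have "((\<lambda>v. c v * dU \<theta> t v) has_real_derivative c u * dU (dU \<theta>) t u) (at u)"
    by (rule deriv_prod_zero[OF D2 z cc])
  moreover have "(\<lambda>v. dS \<gamma> \<theta> t v) = (\<lambda>v. c v * dU \<theta> t v)"
    by (simp add: dS_def c_def)
  ultimately have "((\<lambda>v. dS \<gamma> \<theta> t v) has_vector_derivative c u * dU (dU \<theta>) t u) (at u)"
    using has_real_derivative_iff_has_vector_derivative by metis
  hence "dU (dS \<gamma> \<theta>) t u = c u * dU (dU \<theta>) t u"
    unfolding dU_def by (rule vector_derivative_at)
  thus ?thesis by (simp add: dS2_def dS_def c_def)
qed

lemma dS2_sign:
  fixes \<gamma> :: "real \<Rightarrow> real \<Rightarrow> real^3" and \<theta> :: "real \<Rightarrow> real \<Rightarrow> real"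
  assumes d1: "\<And>v. (\<lambda>v. \<theta> t v) differentiable (at v)"
    and d2: "(\<lambda>v. dU \<theta> t v) differentiable (at u)"
    and dg: "(\<lambda>v. dU \<gamma> t v) differentiable (at u)"
    and nz: "dU \<gamma> t u \<noteq> 0"
  shows "(\<And>v. \<theta> t v \<le> \<theta> t u) \<Longrightarrow> dS2 \<gamma> \<theta> t u \<le> 0"
    and "(\<And>v. \<theta> t u \<le> \<theta> t v) \<Longrightarrow> dS2 \<gamma> \<theta> t u \<ge> 0"
proof -
  have D1: "\<And>v. ((\<lambda>v. \<theta> t v) has_real_derivative dU \<theta> t v) (at v)"
    using real_vd[OF d1] by (simp add: dU_def)
  have D2: "((\<lambda>v. dU \<theta> t v) has_real_derivative dU (dU \<theta>) t u) (at u)"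
    using real_vd[OF d2] by (simp add: dU_def)
  have sq: "(1 / metric_g \<gamma> t u) * ((1 / metric_g \<gamma> t u) * x) = (1 / metric_g \<gamma> t u)^2 * x" for x
    by (simp add: power2_eq_square)
  {
    assume mx: "\<And>v. \<theta> t v \<le> \<theta> t u"
    have z: "dU \<theta> t u = 0" using DERIV_local_max[OF D1[of u], of 1] mx by auto
    have "dU (dU \<theta>) t u \<le> 0" by (rule second_deriv_max[OF D1 D2 mx])
    thus "dS2 \<gamma> \<theta> t u \<le> 0" unfolding dS2_formula[OF d2 dg nz z] sq
      by (simp add: mult_nonneg_nonpos)
  }
  {
    assume mn: "\<And>v. \<theta> t u \<le> \<theta> t v"
    have z: "dU \<theta> t u = 0" using DERIV_local_min[OF D1[of u], of 1] mn by auto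
    have "dU (dU \<theta>) t u \<ge> 0" by (rule second_deriv_min[OF D1 D2 mn])
    thus "dS2 \<gamma> \<theta> t u \<ge> 0" unfolding dS2_formula[OF d2 dg nz z] sq
      by simp
  }
qed

theorem mainTheorem3:
  fixes \<alpha> T :: real and \<gamma> :: "real \<Rightarrow> real \<Rightarrow> real^3" and \<theta> :: "real \<Rightarrow> real \<Rightarrow> real"
    and \<gamma>0 :: "real \<Rightarrow> real^3" and \<theta>0 :: "real \<Rightarrow> real"
  assumes "\<alpha> > 0"
    and "\<forall>u. \<bar>\<theta>0 u\<bar> < pi / 2"
    and "framed_flow_solution \<alpha> T \<gamma> \<theta> \<gamma>0 \<theta>0"
  shows "\<forall>t\<in>{0..T}. \<forall>u. \<bar>\<theta> t u\<bar> < pi / 2 \<and> extended_parabolic \<alpha> (\<theta> t u)"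
proof -
  note F = assms(3)[unfolded framed_flow_solution_def]
  note F0 = F[THEN conjunct1] and F1 = F[THEN conjunct2, THEN conjunct1] and F2 = F[THEN conjunct2, THEN conjunct2, THEN conjunct1] and F6 = F[THEN conjunct2, THEN conjunct2, THEN conjunct2, THEN conjunct2, THEN conjunct2, THEN conjunct2, THEN conjunct1]
    and F10 = F[THEN conjunct2, THEN conjunct2, THEN conjunct2, THEN conjunct2, THEN conjunct2, THEN conjunct2, THEN conjunct2, THEN conjunct2, THEN conjunct2, THEN conjunct2, THEN conjunct1] and F11 = F[THEN conjunct2, THEN conjunct2, THEN conjunct2, THEN conjunct2, THEN conjunct2, THEN conjunct2, THEN conjunct2, THEN conjunct2, THEN conjunct2, THEN conjunct2, THEN conjunct2]
  have T0: "0 \<le> T" using F0 .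
  note per = F1[rule_format, THEN conjunct2]
  note reg = F2[rule_format]
  note ev = F10[rule_format]
  have cth: "continuous_on ({0..T} \<times> UNIV) (\<lambda>(t,u). \<theta> t u)" using F6 .
  have init: "\<And>u. \<theta> 0 u = \<theta>0 u" using F11 by blast
  have z0: "(0::real) \<in> {0..T}" using T0 by simp
  have c0: "continuous_on {0..2*pi} (\<lambda>v. \<theta> 0 v)"
  proof -
    have "continuous_on {0..2*pi} (\<lambda>v. (\<lambda>(t,u). \<theta> t u) (0, v))"
      by (rule continuous_on_compose2[OF cth, of _ "\<lambda>v. (0, v)"])
         (use T0 in \<open>auto intro!: continuous_intros\<close>)
    thus ?thesis by simp
  qed
  have ne: "{0..2*pi} \<noteq> ({} :: real set)" using pi_gt_zero by simp
  obtain umx where umx: "umx \<in> {0..2*pi}" "\<And>v. v \<in> {0..2*pi} \<Longrightarrow> \<theta> 0 v \<le> \<theta> 0 umx"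
    using continuous_attains_sup[OF compact_Icc ne c0] by auto
  obtain umn where umn: "umn \<in> {0..2*pi}" "\<And>v. v \<in> {0..2*pi} \<Longrightarrow> \<theta> 0 umn \<le> \<theta> 0 v"
    using continuous_attains_inf[OF compact_Icc ne c0] by auto
  have Mb: "\<theta> 0 u \<le> \<theta> 0 umx" for u
  proof -
    obtain v' where "v' \<in> {0..2*pi}" "\<theta> 0 v' = \<theta> 0 u"
      using periodic_rep[of "\<theta> 0" u] per[OF z0] by blast
    thus ?thesis using umx(2) by metis
  qed
  have mb: "\<theta> 0 umn \<le> \<theta> 0 u" for u
  proof -
    obtain v' where "v' \<in> {0..2*pi}" "\<theta> 0 v' = \<theta> 0 u"
      using periodic_rep[of "\<theta> 0" u] per[OF z0] by blast
    thus ?thesis using umn(2) by metis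
  qed
  have a1: "\<bar>\<theta>0 umx\<bar> < pi/2" "\<bar>\<theta>0 umn\<bar> < pi/2" using assms(2) by blast+
  have Mlt: "\<theta> 0 umx < pi/2" and mgt: "- (pi/2) < \<theta> 0 umn"
    using a1 init[of umx] init[of umn] by linarith+
  have upper: "\<theta> t u \<le> \<theta> 0 umx" if t: "t \<in> {0..T}" for t u
  proof (rule max_principle[where \<phi>=\<theta> and T=T and M="\<theta> 0 umx" and t=t and u=u, OF per cth _ Mb t])
    fix t u assume t: "t \<in> {0..T}" and mx: "\<And>v. \<theta> t v \<le> \<theta> t u"
    note r1 = reg[OF t, THEN conjunct2, THEN conjunct2, THEN conjunct1]
    note r2 = reg[OF t, of u, THEN conjunct2, THEN conjunct2, THEN conjunct2, THEN conjunct1]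
    note r3 = reg[OF t, of u, THEN conjunct2, THEN conjunct1]
    note r4 = reg[OF t, of u, THEN conjunct2, THEN conjunct2, THEN conjunct2, THEN conjunct2]
    have "dS2 \<gamma> \<theta> t u \<le> 0" by (rule dS2_sign(1)[OF r1 r2 r3 r4 mx])
    hence "\<alpha> * dS2 \<gamma> \<theta> t u \<le> 0" using assms(1) by (simp add: mult_nonneg_nonpos)
    thus "\<exists>D\<le>0. ((\<lambda>s. \<theta> s u) has_real_derivative D) (at t within {0..T})"
      using ev[OF t] by (intro exI[of _ "\<alpha> * dS2 \<gamma> \<theta> t u"] conjI)
  qed
  have cth2: "continuous_on ({0..T} \<times> UNIV) (\<lambda>(t,u). - \<theta> t u)"
  proof -
    have e: "(\<lambda>(t,u). - \<theta> t u) = (\<lambda>x. - (\<lambda>(t,u). \<theta> t u) x)" by (rule ext) auto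
    show ?thesis unfolding e by (rule continuous_on_minus[OF cth])
  qed
  have lower: "- \<theta> t u \<le> - \<theta> 0 umn" if t: "t \<in> {0..T}" for t u
  proof (rule max_principle[where \<phi>="\<lambda>t u. - \<theta> t u" and T=T and M="- \<theta> 0 umn" and t=t and u=u, OF _ cth2 _ _ t])
    show "\<And>t u. t \<in> {0..T} \<Longrightarrow> - \<theta> t (u + 2 * pi) = - \<theta> t u" using per by simp
    show "\<And>u. - \<theta> 0 u \<le> - \<theta> 0 umn" using mb by simp
    fix t u assume t: "t \<in> {0..T}" and mx: "\<And>v. - \<theta> t v \<le> - \<theta> t u"
    have mn: "\<theta> t u \<le> \<theta> t v" for v using mx[of v] by simp
    note r1 = reg[OF t, THEN conjunct2, THEN conjunct2, THEN conjunct1]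
    note r2 = reg[OF t, of u, THEN conjunct2, THEN conjunct2, THEN conjunct2, THEN conjunct1]
    note r3 = reg[OF t, of u, THEN conjunct2, THEN conjunct1]
    note r4 = reg[OF t, of u, THEN conjunct2, THEN conjunct2, THEN conjunct2, THEN conjunct2]
    have "dS2 \<gamma> \<theta> t u \<ge> 0" by (rule dS2_sign(2)[OF r1 r2 r3 r4 mn])
    hence "- (\<alpha> * dS2 \<gamma> \<theta> t u) \<le> 0" using assms(1) by simp
    moreover have "((\<lambda>s. - \<theta> s u) has_real_derivative - (\<alpha> * dS2 \<gamma> \<theta> t u)) (at t within {0..T})"
      using ev[OF t] by (rule DERIV_minus)
    ultimately show "\<exists>D\<le>0. ((\<lambda>s. - \<theta> s u) has_real_derivative D) (at t within {0..T})"
      by (intro exI[of _ "- (\<alpha> * dS2 \<gamma> \<theta> t u)"] conjI)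
  qed
  show ?thesis
  proof (intro ballI allI conjI)
    fix t u assume t: "t \<in> {0..T}"
    have b: "- (pi/2) < \<theta> t u" "\<theta> t u < pi/2"
      using upper[OF t, of u] lower[OF t, of u] Mlt mgt by linarith+
    thus "\<bar>\<theta> t u\<bar> < pi / 2" by (simp add: abs_less_iff)
    show "extended_parabolic \<alpha> (\<theta> t u)"
      unfolding extended_parabolic_def using assms(1) cos_gt_zero_pi[OF b] by simp
  qed
qed


end
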